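(* Let $\|\cdot\|$ be a monotone norm on $\mathbb{R}^K$, let $T \ge 1$, and let $\boldsymbol{\alpha}_1,\dots,\boldsymbol{\alpha}_T \in \Delta(K)$ and $\mathbf{l}_1,\dots,\mathbf{l}_T \in [0,1]^K$. Let $\bar{\mathbf{r}}_T = \frac{1}{T}\sum_{t=1}^T (\boldsymbol{\alpha}_t\odot\mathbf{l}_t, \mathbf{l}_t) \in \mathbb{R}^K\times\mathbb{R}^K$ and suppose $\min_{\mathbf{s} \in S}\|\bar{\mathbf{r}}_T - \mathbf{s}\|^+ \le \gamma$. Then \[ \Big\|\sum_{t=1}^T \boldsymbol{\alpha}_t\odot\mathbf{l}_t\Big\| - C^*\Big(\sum_{t=1}^T \mathbf{l}_t\Big) \le T\gamma. \] Consequently, any algorithm for the repeated game $P$ achieving convergence rate $\gamma(T)$, applied to online load balancing, has $\mathrm{Regret}(T) \le T\gamma(T)$.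
   Context: $\Delta(K) = \{\boldsymbol{\alpha} \in [0,1]^K : \sum_i \alpha_i = 1\}$; $\boldsymbol{\alpha}\odot\mathbf{l} = (\alpha_1 l_1,\dots,\alpha_K l_K)$; $C^*(\mathbf{l}) = \min_{\boldsymbol{\alpha}\in\Delta(K)}\|\boldsymbol{\alpha}\odot\mathbf{l}\|$. A norm is monotone if $\|\mathbf{x}\|\le\|\mathbf{y}\|$ whenever $|x_i|\le|y_i|$ for all $i$. $S = \{(\mathbf{x},\mathbf{y}) \in [0,1]^K\times[0,1]^K : \|\mathbf{x}\| \le C^*(\mathbf{y})\}$ and $\|(\mathbf{x},\mathbf{y})\|^+ = \|\mathbf{x}\|+\|\mathbf{y}\|$. Online load balancing: in each round $t=1,\dots,T$ the learner picks $\boldsymbol{\alpha}_t\in\Delta(K)$, then an adversary reveals $\mathbf{l}_t \in [0,1]^K$; $\mathrm{Regret}(T) = \|\sum_t \boldsymbol{\alpha}_t\odot\mathbf{l}_t\| - C^*(\sum_t \mathbf{l}_t)$. The repeated game $P$ has learner actions $\Delta(K)$, adversary actions $[0,1]^K$, vector payoff $r(\boldsymbol{\alpha},\mathbf{l}) = (\boldsymbol{\alpha}\odot\mathbf{l},\mathbf{l})$, target set $S$, and metric $\mathrm{dist}(\mathbf{r},\mathbf{s}) = \|\mathbf{r}-\mathbf{s}\|^+$; an algorithm has convergence rate $\gamma(T)$ if against every adversary $\min_{\mathbf{s}\in S}\mathrm{dist}(\bar{\mathbf{r}}_T,\mathbf{s}) \le \gamma(T)$, where $\bar{\mathbf{r}}_T$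 is the average payoff. *)

theory Defs
  imports "HOL-Analysis.Analysis"
begin

definition is_norm :: "(real^'k \<Rightarrow> real) \<Rightarrow> bool" where
  "is_norm N \<longleftrightarrow>
     (\<forall>x. N x = 0 \<longleftrightarrow> x = 0) \<and>
     (\<forall>c x. N (c *\<^sub>R x) = \<bar>c\<bar> * N x) \<and>
     (\<forall>x y. N (x + y) \<le> N x + N y)"

definition monotone_norm :: "(real^'k \<Rightarrow> real) \<Rightarrow> bool" where
  "monotone_norm N \<longleftrightarrow> is_norm N \<and>
     (\<forall>x y. (\<forall>i. \<bar>x $ i\<bar> \<le> \<bar>y $ i\<bar>) \<longrightarrow> N x \<le> N y)"

definition prob_simplex :: "(real^'k) set" where
  "prob_simplex = {a. (\<forall>i. 0 \<le> a $ i \<and> a $ i \<le> 1) \<and> (\<Sum>i\<in>UNIV. a $ i) = 1}"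

definition unit_cube :: "(real^'k) set" where
  "unit_cube = {x. \<forall>i. 0 \<le> x $ i \<and> x $ i \<le> 1}"

definition odot :: "real^'k \<Rightarrow> real^'k \<Rightarrow> real^'k" where
  "odot a l = (\<chi> i. a $ i * l $ i)"

text \<open>C*(l) = min over the prob_simplex of N(alpha odot l) (the minimum is attained).\<close>
definition Cstar :: "(real^'k \<Rightarrow> real) \<Rightarrow> real^'k \<Rightarrow> real" where
  "Cstar N l = Inf ((\<lambda>a. N (odot a l)) ` prob_simplex)"

definition target_set :: "(real^'k \<Rightarrow> real) \<Rightarrow> ((real^'k) \<times> (real^'k)) set" where
  "target_set N = {(x, y). x \<in> unit_cube \<and> y \<in> unit_cube \<and> N x \<le> Cstar N y}"

definition norm_plus :: "(real^'k \<Rightarrow> real) \<Rightarrow> (real^'k) \<times> (real^'k) \<Rightarrow> real" where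
  "norm_plus N r = N (fst r) + N (snd r)"

definition dist_plus :: "(real^'k \<Rightarrow> real) \<Rightarrow> (real^'k) \<times> (real^'k) \<Rightarrow> (real^'k) \<times> (real^'k) \<Rightarrow> real" where
  "dist_plus N r s = norm_plus N (r - s)"

definition dist_to_target :: "(real^'k \<Rightarrow> real) \<Rightarrow> (real^'k) \<times> (real^'k) \<Rightarrow> real" where
  "dist_to_target N r = Inf (dist_plus N r ` target_set N)"

definition payoff :: "real^'k \<Rightarrow> real^'k \<Rightarrow> (real^'k) \<times> (real^'k)" where
  "payoff a l = (odot a l, l)"

text \<open>A (deterministic) learner maps the history of
  past (action, loss) pairs to an action; an (adaptive) adversary maps the
  history and the learner's current action to a loss vector.
  play L A n is the history after n rounds (round t is the t-th list element).\<close>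
fun play :: "(((real^'k) \<times> (real^'k)) list \<Rightarrow> real^'k) \<Rightarrow>
             (((real^'k) \<times> (real^'k)) list \<Rightarrow> real^'k \<Rightarrow> real^'k) \<Rightarrow> nat \<Rightarrow>
             ((real^'k) \<times> (real^'k)) list" where
  "play L A 0 = []"
| "play L A (Suc n) =
     (let h = play L A n; a = L h; l = A h a in h @ [(a, l)])"

definition valid_learner :: "(((real^'k) \<times> (real^'k)) list \<Rightarrow> real^'k) \<Rightarrow> bool" where
  "valid_learner L \<longleftrightarrow> (\<forall>h. L h \<in> prob_simplex)"

definition valid_adversary :: "(((real^'k) \<times> (real^'k)) list \<Rightarrow> real^'k \<Rightarrow> real^'k) \<Rightarrow> bool" where
  "valid_adversary A \<longleftrightarrow> (\<forall>h a. A h a \<in> unit_cube)"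

definition avg_payoff :: "((real^'k) \<times> (real^'k)) list \<Rightarrow> (real^'k) \<times> (real^'k)" where
  "avg_payoff h = (1 / real (length h)) *\<^sub>R (\<Sum>(a, l)\<leftarrow>h. payoff a l)"

definition has_rate :: "(real^'k \<Rightarrow> real) \<Rightarrow> (((real^'k) \<times> (real^'k)) list \<Rightarrow> real^'k) \<Rightarrow>
                        (nat \<Rightarrow> real) \<Rightarrow> bool" where
  "has_rate N L \<gamma> \<longleftrightarrow>
     (\<forall>A. valid_adversary A \<longrightarrow>
        (\<forall>T\<ge>1. dist_to_target N (avg_payoff (play L A T)) \<le> \<gamma> T))"

definition regret :: "(real^'k \<Rightarrow> real) \<Rightarrow> ((real^'k) \<times> (real^'k)) list \<Rightarrow> real" where
  "regret N h = N (\<Sum>(a, l)\<leftarrow>h. odot a l) - Cstar N (\<Sum>(a, l)\<leftarrow>h. l)"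

end

theory Submission
  imports Defs
begin

lemma N_props:
  assumes "monotone_norm N"
  shows "N 0 = 0" "\<And>c x. N (c *\<^sub>R x) = \<bar>c\<bar> * N x" "\<And>x y. N (x + y) \<le> N x + N y"
    "\<And>x y. (\<forall>i. \<bar>x $ i\<bar> \<le> \<bar>y $ i\<bar>) \<Longrightarrow> N x \<le> N y"
  using assms unfolding monotone_norm_def is_norm_def by auto

lemma N_nonneg:
  assumes "monotone_norm N" shows "N x \<ge> 0"
proof -
  have "N (x + (-1) *\<^sub>R x) \<le> N x + N ((-1) *\<^sub>R x)" using N_props(3)[OF assms] .
  moreover have "x + (-1) *\<^sub>R x = 0" by simp
  moreover have "N ((-1) *\<^sub>R x) = N x" using N_props(2)[OF assms, of "-1" x] by simp
  ultimately show ?thesis using N_props(1)[OF assms] by simp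
qed

lemma N_neg:
  assumes "monotone_norm N" shows "N (- x) = N x"
  using N_props(2)[OF assms, of "-1" x] by simp

lemma N_odot:
  assumes "monotone_norm N" "a \<in> prob_simplex" shows "N (odot a d) \<le> N d"
proof (rule N_props(4)[OF assms(1)], intro allI)
  fix i
  have "0 \<le> a $ i" "a $ i \<le> 1" using assms(2) unfolding prob_simplex_def by auto
  hence "\<bar>a $ i * d $ i\<bar> \<le> \<bar>d $ i\<bar>"
    by (simp add: abs_mult mult_left_le_one_le)
  thus "\<bar>odot a d $ i\<bar> \<le> \<bar>d $ i\<bar>" unfolding odot_def by simp
qed

lemma odot_add: "odot a (u + v) = odot a u + odot a v"
  unfolding odot_def by (simp add: vec_eq_iff algebra_simps)

lemma odot_scale: "odot a (c *\<^sub>R u) = c *\<^sub>R odot a u"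
  unfolding odot_def by (simp add: vec_eq_iff algebra_simps)

lemma simplex_ne: "(prob_simplex :: (real^'k) set) \<noteq> {}"
proof -
  obtain j :: 'k where True by simp
  let ?a = "(\<chi> i. if i = j then 1 else 0) :: real^'k"
  have "(\<Sum>i\<in>UNIV. ?a $ i) = 1" by simp
  hence "?a \<in> prob_simplex" unfolding prob_simplex_def by auto
  thus ?thesis by auto
qed

lemma Cstar_le:
  assumes "monotone_norm N" "a \<in> prob_simplex"
  shows "Cstar N y \<le> N (odot a y)"
  unfolding Cstar_def
  by (rule cInf_lower) (use assms N_nonneg[OF assms(1)] in \<open>auto intro: bdd_belowI[where m=0]\<close>)

lemma core:
  assumes mono: "monotone_norm N" and T: "T > 0"
  shows "N X - Cstar N Y \<le> T * dist_to_target N ((1 / T) *\<^sub>R (X, Y))"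
proof -
  let ?u = "(1/T) *\<^sub>R X" and ?v = "(1/T) *\<^sub>R Y"
  have NX: "N X = T * N ?u" using N_props(2)[OF mono, of "1/T" X] T by simp
  have key: "N X - Cstar N Y \<le> T * dist_plus N ((1 / T) *\<^sub>R (X, Y)) s"
    if s: "s \<in> target_set N" for s
  proof -
    obtain x y where sxy: "s = (x, y)" "N x \<le> Cstar N y" using s unfolding target_set_def by auto
    have d: "dist_plus N ((1 / T) *\<^sub>R (X, Y)) s = N (?u - x) + N (?v - y)"
      unfolding dist_plus_def norm_plus_def sxy by simp
    have "N X - T * (N (?u - x) + N (?v - y)) \<le> N (odot a Y)" if a: "a \<in> prob_simplex" for a
    proof -
      have 1: "N ?u \<le> N (?u - x) + N x" using N_props(3)[OF mono, of "?u - x" x] by simp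
      have 2: "N x \<le> N (odot a y)" using sxy(2) Cstar_le[OF mono a, of y] by simp
      have "N (odot a y) \<le> N (odot a ?v) + N (odot a (y - ?v))"
        using N_props(3)[OF mono, of "odot a ?v" "odot a (y - ?v)"] by (simp add: odot_add[symmetric])
      also have "N (odot a (y - ?v)) \<le> N (y - ?v)" using N_odot[OF mono a] .
      also have "N (y - ?v) = N (?v - y)" using N_neg[OF mono, of "?v - y"] by simp
      finally have 3: "N (odot a y) \<le> N (odot a ?v) + N (?v - y)" by simp
      have 4: "N (odot a Y) = T * N (odot a ?v)"
        using N_props(2)[OF mono, of "1/T" "odot a Y"] T by (simp add: odot_scale)
      have "N ?u \<le> N (?u - x) + N (?v - y) + N (odot a ?v)" using 1 2 3 by linarith
      hence "T * N ?u \<le> T * (N (?u - x) + N (?v - y)) + T * N (odot a ?v)"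
        using T by (simp add: distrib_left[symmetric] mult_left_mono)
      thus ?thesis using NX 4 by linarith
    qed
    hence "N X - T * (N (?u - x) + N (?v - y)) \<le> Cstar N Y"
      unfolding Cstar_def using simplex_ne by (intro cInf_greatest) auto
    hence "N X - Cstar N Y \<le> T * (N (?u - x) + N (?v - y))" by linarith
    thus ?thesis by (simp only: d)
  qed
  have ne: "target_set N \<noteq> {}"
  proof -
    have "Cstar N 0 = 0"
    proof -
      have "(\<lambda>a. N (odot a 0)) ` prob_simplex = {0}"
        using simplex_ne N_props(1)[OF mono] by (auto simp: odot_def zero_vec_def)
      thus ?thesis unfolding Cstar_def by simp
    qed
    hence "(0, 0) \<in> target_set N" unfolding target_set_def unit_cube_def
      using N_props(1)[OF mono] by (simp add: zero_prod_def)
    thus ?thesis by auto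
  qed
  have "(N X - Cstar N Y) / T \<le> dist_to_target N ((1 / T) *\<^sub>R (X, Y))"
    unfolding dist_to_target_def
    using ne key T by (intro cInf_greatest) (auto simp: pos_divide_le_eq mult.commute)
  thus ?thesis using T by (simp add: pos_divide_le_eq mult.commute)
qed

lemma sum_payoff: "(\<Sum>t\<in>A. payoff (a t) (l t)) = (\<Sum>t\<in>A. odot (a t) (l t), \<Sum>t\<in>A. l t)"
  by (simp add: payoff_def prod_eq_iff fst_sum snd_sum)

lemma sum_list_payoff: "(\<Sum>(a, l)\<leftarrow>h. payoff a l) = ((\<Sum>(a, l)\<leftarrow>h. odot a l), (\<Sum>(a, l)\<leftarrow>h. l))"
  by (induction h) (auto simp: payoff_def zero_prod_def)

lemma length_play: "length (play L A n) = n"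
  by (induction n) (auto simp: Let_def)

theorem proposition2:
  fixes N :: "real^'k \<Rightarrow> real"
  assumes mono: "monotone_norm N"
  shows "(\<forall>(T::nat) (\<alpha>::nat \<Rightarrow> real^'k) (l::nat \<Rightarrow> real^'k) (\<gamma>::real).
            T \<ge> 1 \<longrightarrow> (\<forall>t\<in>{1..T}. \<alpha> t \<in> prob_simplex) \<longrightarrow> (\<forall>t\<in>{1..T}. l t \<in> unit_cube) \<longrightarrow>
            dist_to_target N ((1 / real T) *\<^sub>R (\<Sum>t=1..T. payoff (\<alpha> t) (l t))) \<le> \<gamma> \<longrightarrow>
            N (\<Sum>t=1..T. odot (\<alpha> t) (l t)) - Cstar N (\<Sum>t=1..T. l t) \<le> real T * \<gamma>)
       \<and> (\<forall>L \<gamma>. valid_learner L \<longrightarrow> has_rate N L \<gamma> \<longrightarrow>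
            (\<forall>A. valid_adversary A \<longrightarrow>
               (\<forall>T\<ge>1. regret N (play L A T) \<le> real T * \<gamma> T)))"
proof (intro conjI allI impI)
  fix T :: nat and \<alpha> l :: "nat \<Rightarrow> real^'k" and \<gamma> :: real
  assume T: "T \<ge> 1" and d: "dist_to_target N ((1 / real T) *\<^sub>R (\<Sum>t=1..T. payoff (\<alpha> t) (l t))) \<le> \<gamma>"
  have Tp: "real T > 0" using T by simp
  have "N (\<Sum>t=1..T. odot (\<alpha> t) (l t)) - Cstar N (\<Sum>t=1..T. l t)
        \<le> real T * dist_to_target N ((1 / real T) *\<^sub>R (\<Sum>t=1..T. payoff (\<alpha> t) (l t)))"
    unfolding sum_payoff by (rule core[OF mono Tp])
  also have "\<dots> \<le> real T * \<gamma>" using d Tp by (simp add: mult_left_mono)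
  finally show "N (\<Sum>t=1..T. odot (\<alpha> t) (l t)) - Cstar N (\<Sum>t=1..T. l t) \<le> real T * \<gamma>" .
next
  fix L \<gamma> and A :: "((real^'k) \<times> (real^'k)) list \<Rightarrow> real^'k \<Rightarrow> real^'k" and T :: nat
  assume r: "has_rate N L \<gamma>" and A: "valid_adversary A" and T: "T \<ge> 1"
  have d: "dist_to_target N (avg_payoff (play L A T)) \<le> \<gamma> T" using r A T unfolding has_rate_def by auto
  have Tp: "real T > 0" using T by simp
  have "regret N (play L A T) \<le> real T * dist_to_target N (avg_payoff (play L A T))"
    unfolding regret_def avg_payoff_def sum_list_payoff length_play by (rule core[OF mono Tp])
  also have "\<dots> \<le> real T * \<gamma> T" using d Tp by (simp add: mult_left_mono)
  finally show "regret N (play L A T) \<le> real T * \<gamma> T" .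
qed

end
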